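(* Let $N$ be a smooth connected manifold, Riemannian-embedded in a matrix algebra $\mathcal M$ with $0\in N$. Then $L^2_0(S^1,N)=L^2(S^1,N)$. Moreover, every loop $\gamma\in C^\infty(S^1,N)$ is connected, by a continuous path in $L^2(S^1,N)$, to a null-homotopic piecewise smooth loop.
   Context: $\mathcal M$ is an algebra of complex matrices with Hermitian product $(A,B)\mapsto \mathrm{tr}(AB^* )$. $S^1=\mathbb R/\mathbb Z$. For $s\in\mathbb R$, $H^s(S^1,\mathcal M)$ is the completion of $C^\infty(S^1,\mathcal M)$ for the norm $\|f\|_s^2=\sum_{n\in\mathbb Z}(1+|n|)^{2s}\|f_n\|^2$, $f_n$ the Fourier coefficients; $L^2=H^0$. $H^s(S^1,N)$ is the closure of $C^\infty(S^1,N)$ in $H^s(S^1,\mathcal M)$, and $H^s_0(S^1,N)$ is the closure in $H^s(S^1,\mathcal M)$ of the based loops $C^\infty_0(S^1,N)=\{\gamma\in C^\infty(S^1,N):\gamma(0)=0\}$. $L^2(S^1,N)$ and $L^2_0(S^1,N)$ carry the topology induced by the $L^2$-norm. *)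

theory Defs
  imports "HOL-Analysis.Analysis"
begin

text \<open>The matrix algebra M = complex n x n matrices, as the type complex^'n^'n.
  Its norm (Euclidean norm of the entries) is the Frobenius norm sqrt(tr(A A^* )).\<close>

text \<open>C-infinity maps on an open set: differentiable, and every directional derivative
  is again C-infinity (coinductively; in finite dimensions this is the usual notion).\<close>
coinductive smooth_on :: "'a::real_normed_vector set \<Rightarrow> ('a \<Rightarrow> 'b::real_normed_vector) \<Rightarrow> bool"
  for U where
  "(\<forall>x\<in>U. (f has_derivative f' x) (at x)) \<Longrightarrow> (\<forall>v. smooth_on U (\<lambda>x. f' x v)) \<Longrightarrow> smooth_on U f"

definition smooth_submanifold :: "'a::euclidean_space set \<Rightarrow> bool" where
  "smooth_submanifold N \<longleftrightarrow>
     (\<forall>p\<in>N. \<exists>U V (\<phi>::'a\<Rightarrow>'a) \<psi> L. open U \<and> p \<in> U \<and> open V \<and>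
        smooth_on U \<phi> \<and> smooth_on V \<psi> \<and> \<phi> ` U = V \<and>
        (\<forall>x\<in>U. \<psi> (\<phi> x) = x) \<and> (\<forall>y\<in>V. \<phi> (\<psi> y) = y) \<and>
        subspace L \<and> \<phi> ` (N \<inter> U) = L \<inter> V)"

text \<open>Loops S^1 = R/Z -> M are 1-periodic functions real => M.\<close>
definition smooth_loops :: "'a::real_normed_vector set \<Rightarrow> (real \<Rightarrow> 'a) set" where
  "smooth_loops N = {\<gamma>. smooth_on UNIV \<gamma> \<and> (\<forall>t. \<gamma> (t + 1) = \<gamma> t) \<and> range \<gamma> \<subseteq> N}"

definition based_smooth_loops :: "'a::real_normed_vector set \<Rightarrow> (real \<Rightarrow> 'a) set" where
  "based_smooth_loops N = {\<gamma> \<in> smooth_loops N. \<gamma> 0 = 0}"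

definition L2_dist :: "(real \<Rightarrow> 'a::euclidean_space) \<Rightarrow> (real \<Rightarrow> 'a) \<Rightarrow> real" where
  "L2_dist f g = sqrt (LINT t:{0..1}|lborel. (norm (f t - g t))\<^sup>2)"

definition square_integrable :: "(real \<Rightarrow> 'a::euclidean_space) \<Rightarrow> bool" where
  "square_integrable f \<longleftrightarrow> f \<in> borel_measurable lborel \<and>
     set_integrable lborel {0..1} (\<lambda>t. (norm (f t))\<^sup>2)"

text \<open>L^2-closure of a set of loops (elements represented by functions; the set is
  closed under a.e. modification).\<close>
definition L2_closure :: "(real \<Rightarrow> 'a::euclidean_space) set \<Rightarrow> (real \<Rightarrow> 'a) set" where
  "L2_closure S = {f. square_integrable f \<and> (\<forall>e>0. \<exists>g\<in>S. L2_dist f g < e)}"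

definition L2_loops :: "'a::euclidean_space set \<Rightarrow> (real \<Rightarrow> 'a) set" where
  "L2_loops N = L2_closure (smooth_loops N)"

definition L2_0_loops :: "'a::euclidean_space set \<Rightarrow> (real \<Rightarrow> 'a) set" where
  "L2_0_loops N = L2_closure (based_smooth_loops N)"

definition piecewise_smooth_loop :: "'a::real_normed_vector set \<Rightarrow> (real \<Rightarrow> 'a) \<Rightarrow> bool" where
  "piecewise_smooth_loop N \<sigma> \<longleftrightarrow> continuous_on UNIV \<sigma> \<and> (\<forall>t. \<sigma> (t + 1) = \<sigma> t) \<and> range \<sigma> \<subseteq> N \<and>
     (\<exists>P. finite P \<and> P \<subseteq> {0..1} \<and> 0 \<in> P \<and> 1 \<in> P \<and>
        (\<forall>a\<in>P. \<forall>b\<in>P. a < b \<and> {a<..<b} \<inter> P = {} \<longrightarrow>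
           (\<exists>g. smooth_on UNIV g \<and> (\<forall>t\<in>{a..b}. \<sigma> t = g t))))"

definition null_homotopic_loop :: "'a::real_normed_vector set \<Rightarrow> (real \<Rightarrow> 'a) \<Rightarrow> bool" where
  "null_homotopic_loop N \<sigma> \<longleftrightarrow> (\<exists>a. homotopic_loops N \<sigma> (\<lambda>t. a))"

definition L2_path_connects :: "'a::euclidean_space set \<Rightarrow> (real \<Rightarrow> real \<Rightarrow> 'a) \<Rightarrow> (real \<Rightarrow> 'a) \<Rightarrow> (real \<Rightarrow> 'a) \<Rightarrow> bool" where
  "L2_path_connects N p f g \<longleftrightarrow> (\<forall>s\<in>{0..1}. p s \<in> L2_loops N) \<and> p 0 = f \<and> p 1 = g \<and>
     (\<forall>s\<in>{0..1}. \<forall>e>0. \<exists>d>0. \<forall>s'\<in>{0..1}. \<bar>s' - s\<bar> < d \<longrightarrow> L2_dist (p s') (p s) < e)"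

end

theory Submission
  imports Defs "HOL-Computational_Algebra.Polynomial"
begin

lemma smooth_onD:
  assumes "smooth_on U f"
  obtains f' where "\<And>x. x\<in>U \<Longrightarrow> (f has_derivative f' x) (at x)" "\<And>v. smooth_on U (\<lambda>x. f' x v)"
proof (rule smooth_on.cases[OF assms])
  fix g g' assume "f = g" "\<forall>x\<in>U. (g has_derivative g' x) (at x)" "\<forall>v. smooth_on U (\<lambda>x. g' x v)"
  then show thesis using that by blast
qed

lemma smooth_on_const: "smooth_on U (\<lambda>x. c)"
proof -
  have "\<exists>c. f = (\<lambda>x. c)" if "f = (\<lambda>x. c)" for f using that by blast
  show ?thesis
    by (coinduction arbitrary: c rule: smooth_on.coinduct) (auto intro!: exI[of _ "\<lambda>x v. 0"])
qed

lemma smooth_on_lin_comp: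
  assumes L: "bounded_linear L" and f: "smooth_on U f"
  shows "smooth_on U (\<lambda>x. L (f x))"
  using f
proof (coinduction arbitrary: f rule: smooth_on.coinduct)
  case (smooth_on g)
  then obtain g' where d: "\<And>x. x\<in>U \<Longrightarrow> (g has_derivative g' x) (at x)" and s: "\<And>v. smooth_on U (\<lambda>x. g' x v)"
    by (rule smooth_onD) blast
  show ?case
    by (intro exI[of _ "\<lambda>x. L (g x)"] exI[of _ "\<lambda>x v. L (g' x v)"] conjI ballI allI disjI1)
       (auto intro!: bounded_linear.has_derivative[OF L] d s)
qed

lemma smooth_on_imp_continuous: "smooth_on U f \<Longrightarrow> x \<in> U \<Longrightarrow> isCont f x"
  by (metis smooth_onD has_derivative_continuous)

lemma smooth_on_continuous_on: "smooth_on U f \<Longrightarrow> continuous_on U f"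
  by (meson continuous_at_imp_continuous_on smooth_on_imp_continuous)

lemma smooth_on_subset: "smooth_on U f \<Longrightarrow> V \<subseteq> U \<Longrightarrow> smooth_on V f"
proof (coinduction arbitrary: f rule: smooth_on.coinduct)
  case (smooth_on g)
  obtain g' where d: "\<And>x. x\<in>U \<Longrightarrow> (g has_derivative g' x) (at x)" and s: "\<And>v. smooth_on U (\<lambda>x. g' x v)"
    using smooth_onD[OF smooth_on(1)] by blast
  show ?case
    apply (intro exI[of _ g] exI[of _ g'] conjI ballI allI)
    using smooth_on d s by auto
qed

definition sprod :: "(('a \<Rightarrow> real) \<times> ('a \<Rightarrow> 'b::real_normed_vector)) list \<Rightarrow> 'a \<Rightarrow> 'b" where
  "sprod xs = (\<lambda>x. \<Sum>(a,b)\<leftarrow>xs. a x *\<^sub>R b x)"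

lemma sprod_deriv:
  assumes "\<forall>(a,b)\<in>set xs. smooth_on U a \<and> smooth_on U b"
  shows "\<exists>h'. (\<forall>x\<in>U. (sprod xs has_derivative h' x) (at x)) \<and>
     (\<forall>v. \<exists>ys. (\<forall>(a,b)\<in>set ys. smooth_on U a \<and> smooth_on U b) \<and> (\<lambda>x. h' x v) = sprod ys)"
  using assms
proof (induction xs)
  case Nil
  show ?case by (auto simp: sprod_def intro!: exI[of _ "\<lambda>x v. 0"] exI[of _ "[]"])
next
  case (Cons p xs)
  obtain a b where p: "p = (a,b)" by fastforce
  with Cons.prems have sa: "smooth_on U a" and sb: "smooth_on U b" by auto
  from Cons.IH Cons.prems obtain h' where hd: "\<forall>x\<in>U. (sprod xs has_derivative h' x) (at x)"
    and hs: "\<forall>v. \<exists>ys. (\<forall>(a,b)\<in>set ys. smooth_on U a \<and> smooth_on U b) \<and> (\<lambda>x. h' x v) = sprod ys"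
    by auto
  obtain a' where ad: "\<And>x. x\<in>U \<Longrightarrow> (a has_derivative a' x) (at x)" and as: "\<And>v. smooth_on U (\<lambda>x. a' x v)"
    using smooth_onD[OF sa] by blast
  obtain b' where bd: "\<And>x. x\<in>U \<Longrightarrow> (b has_derivative b' x) (at x)" and bs: "\<And>v. smooth_on U (\<lambda>x. b' x v)"
    using smooth_onD[OF sb] by blast
  have eq: "sprod (p#xs) = (\<lambda>x. a x *\<^sub>R b x + sprod xs x)"
    by (auto simp: sprod_def p)
  show ?case
  proof (intro exI[of _ "\<lambda>x v. a x *\<^sub>R b' x v + a' x v *\<^sub>R b x + h' x v"] conjI ballI allI)
    fix x assume "x \<in> U"
    then show "(sprod (p # xs) has_derivative (\<lambda>v. a x *\<^sub>R b' x v + a' x v *\<^sub>R b x + h' x v)) (at x)"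
      unfolding eq by (auto intro!: derivative_eq_intros ad bd hd[rule_format])
  next
    fix v
    obtain ys where ys: "\<forall>(a,b)\<in>set ys. smooth_on U a \<and> smooth_on U b" "(\<lambda>x. h' x v) = sprod ys"
      using hs by blast
    show "\<exists>ys. (\<forall>(a, b)\<in>set ys. smooth_on U a \<and> smooth_on U b) \<and>
          (\<lambda>x. a x *\<^sub>R b' x v + a' x v *\<^sub>R b x + h' x v) = sprod ys"
      apply (rule exI[of _ "(a, \<lambda>x. b' x v) # (\<lambda>x. a' x v, b) # ys"])
      using ys sa sb as bs by (auto simp: sprod_def fun_eq_iff)
  qed
qed

lemma smooth_on_sprod:
  assumes "\<forall>(a,b)\<in>set xs. smooth_on U a \<and> smooth_on U b"
  shows "smooth_on U (sprod xs)"
  using assms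
proof (coinduction arbitrary: xs rule: smooth_on.coinduct)
  case (smooth_on xs)
  from sprod_deriv[OF this] obtain h' where "(\<forall>x\<in>U. (sprod xs has_derivative h' x) (at x))"
    "(\<forall>v. \<exists>ys. (\<forall>(a,b)\<in>set ys. smooth_on U a \<and> smooth_on U b) \<and> (\<lambda>x. h' x v) = sprod ys)" by blast
  then show ?case by (intro exI[of _ "sprod xs"] exI[of _ h']) auto
qed

lemma smooth_on_scaleR:
  assumes "smooth_on U a" "smooth_on U b"
  shows "smooth_on U (\<lambda>x. a x *\<^sub>R b x)"
  using smooth_on_sprod[of "[(a,b)]" U] assms by (simp add: sprod_def)

lemma smooth_on_add:
  assumes "smooth_on U f" "smooth_on U g"
  shows "smooth_on U (\<lambda>x. f x + g x)"
proof -
  have "smooth_on U (sprod [(\<lambda>x. 1, f), (\<lambda>x. 1, g)])"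
    by (rule smooth_on_sprod) (auto simp: assms smooth_on_const)
  then show ?thesis by (simp add: sprod_def)
qed

lemma smooth_on_mult:
  fixes a b :: "_ \<Rightarrow> real"
  assumes "smooth_on U a" "smooth_on U b"
  shows "smooth_on U (\<lambda>x. a x * b x)"
  using smooth_on_scaleR[OF assms] by simp

lemma smooth_on_minus:
  assumes "smooth_on U f"
  shows "smooth_on U (\<lambda>x. - f x)"
  using smooth_on_lin_comp[OF bounded_linear_minus[OF bounded_linear_ident] assms] by simp

lemma smooth_on_diff:
  assumes "smooth_on U f" "smooth_on U g"
  shows "smooth_on U (\<lambda>x. f x - g x)"
  using smooth_on_add[OF assms(1) smooth_on_minus[OF assms(2)]] by simp

lemma smooth_on_id: "smooth_on U (\<lambda>x. x)"
proof (coinduction rule: smooth_on.coinduct)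
  case smooth_on
  show ?case by (intro exI[of _ "\<lambda>x. x"] exI[of _ "\<lambda>x v. v"]) (auto simp: smooth_on_const)
qed

lemma smooth_on_linear: "bounded_linear L \<Longrightarrow> smooth_on U L"
  using smooth_on_lin_comp[OF _ smooth_on_id] by auto

definition cprod :: "('a \<Rightarrow> 'm) \<Rightarrow> (('a \<Rightarrow> real) \<times> ('m \<Rightarrow> 'b::real_normed_vector)) list \<Rightarrow> 'a \<Rightarrow> 'b" where
  "cprod f xs = (\<lambda>x. \<Sum>(a,k)\<leftarrow>xs. a x *\<^sub>R k (f x))"

lemma linear_basis_expand:
  fixes l :: "'m::euclidean_space \<Rightarrow> 'b::real_vector"
  assumes "linear l"
  shows "l v = (\<Sum>i\<in>Basis. (v \<bullet> i) *\<^sub>R l i)"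
proof -
  have "l v = l (\<Sum>i\<in>Basis. (v \<bullet> i) *\<^sub>R i)" by (simp add: euclidean_representation)
  also have "\<dots> = (\<Sum>i\<in>Basis. (v \<bullet> i) *\<^sub>R l i)"
    by (simp add: linear_sum[OF assms] linear_scale[OF assms])
  finally show ?thesis .
qed

lemma cprod_deriv:
  fixes f :: "'a::real_normed_vector \<Rightarrow> 'm::euclidean_space"
  assumes f: "smooth_on U f" and fV: "\<forall>x\<in>U. f x \<in> V"
  and "\<forall>(a,k)\<in>set xs. smooth_on U a \<and> smooth_on V k"
  shows "\<exists>h'. (\<forall>x\<in>U. (cprod f xs has_derivative h' x) (at x)) \<and>
     (\<forall>v. \<exists>ys. (\<forall>(a,k)\<in>set ys. smooth_on U a \<and> smooth_on V k) \<and> (\<lambda>x. h' x v) = cprod f ys)"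
  using assms(3)
proof (induction xs)
  case Nil
  show ?case by (auto simp: cprod_def intro!: exI[of _ "\<lambda>x v. 0"] exI[of _ "[]"])
next
  case (Cons p xs)
  obtain a k where p: "p = (a,k)" by fastforce
  with Cons.prems have sa: "smooth_on U a" and sk: "smooth_on V k" by auto
  from Cons.IH Cons.prems obtain h' where hd: "\<forall>x\<in>U. (cprod f xs has_derivative h' x) (at x)"
    and hs: "\<forall>v. \<exists>ys. (\<forall>(a,k)\<in>set ys. smooth_on U a \<and> smooth_on V k) \<and> (\<lambda>x. h' x v) = cprod f ys"
    by auto
  obtain a' where ad: "\<And>x. x\<in>U \<Longrightarrow> (a has_derivative a' x) (at x)" and as: "\<And>v. smooth_on U (\<lambda>x. a' x v)"
    using smooth_onD[OF sa] by blast
  obtain k' where kd: "\<And>x. x\<in>V \<Longrightarrow> (k has_derivative k' x) (at x)" and ks: "\<And>v. smooth_on V (\<lambda>x. k' x v)"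
    using smooth_onD[OF sk] by blast
  obtain f' where fd: "\<And>x. x\<in>U \<Longrightarrow> (f has_derivative f' x) (at x)" and fs: "\<And>v. smooth_on U (\<lambda>x. f' x v)"
    using smooth_onD[OF f] by blast
  have eq: "cprod f (p#xs) = (\<lambda>x. a x *\<^sub>R k (f x) + cprod f xs x)"
    by (auto simp: cprod_def p)
  obtain bl where bl: "set bl = (Basis::'m set)" "distinct bl"
    using finite_distinct_list[OF finite_Basis] by blast
  define Z where "Z v = map (\<lambda>i. (\<lambda>x. a x * (f' x v \<bullet> i), \<lambda>y. k' y i)) bl" for v
  have zsm: "\<forall>(b,l)\<in>set (Z v). smooth_on U b \<and> smooth_on V l" for v
  proof -
    have "smooth_on U (\<lambda>x. a x * (f' x v \<bullet> i))" for i
      by (rule smooth_on_mult[OF sa smooth_on_lin_comp[OF bounded_linear_inner_left fs]])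
    then show ?thesis using ks by (auto simp: Z_def)
  qed
  have zeq: "cprod f (Z v) x = a x *\<^sub>R k' (f x) (f' x v)" if x: "x \<in> U" for x v
  proof -
    have lin: "linear (k' (f x))"
      using kd[OF fV[rule_format, OF x]] by (simp add: has_derivative_linear)
    have "cprod f (Z v) x = (\<Sum>i\<leftarrow>bl. (a x * (f' x v \<bullet> i)) *\<^sub>R k' (f x) i)"
      by (simp add: cprod_def o_def Z_def)
    also have "\<dots> = (\<Sum>i\<in>Basis. (a x * (f' x v \<bullet> i)) *\<^sub>R k' (f x) i)"
      using bl by (simp add: sum_list_distinct_conv_sum_set)
    also have "\<dots> = a x *\<^sub>R (\<Sum>i\<in>Basis. (f' x v \<bullet> i) *\<^sub>R k' (f x) i)"
      by (simp only: scaleR_sum_right scaleR_scaleR)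
    also have "\<dots> = a x *\<^sub>R k' (f x) (f' x v)"
      using linear_basis_expand[OF lin, of "f' x v"] by (simp only:)
    finally show ?thesis .
  qed
  show ?case
  proof (intro exI[of _ "\<lambda>x v. cprod f (Z v) x + a' x v *\<^sub>R k (f x) + h' x v"] conjI ballI allI)
    fix x assume x: "x \<in> U"
    have kfd: "((\<lambda>x. k (f x)) has_derivative (\<lambda>v. k' (f x) (f' x v))) (at x)"
      using has_derivative_compose[OF fd[OF x] kd[OF fV[rule_format, OF x]]] by (simp add: o_def)
    have "(cprod f (p # xs) has_derivative (\<lambda>v. a x *\<^sub>R k' (f x) (f' x v) + a' x v *\<^sub>R k (f x) + h' x v)) (at x)"
      unfolding eq by (auto intro!: derivative_eq_intros ad x kfd hd[rule_format])
    then show "(cprod f (p # xs) has_derivative (\<lambda>v. cprod f (Z v) x + a' x v *\<^sub>R k (f x) + h' x v)) (at x)"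
      by (simp add: zeq[OF x])
  next
    fix v
    obtain ys where ys: "\<forall>(a,k)\<in>set ys. smooth_on U a \<and> smooth_on V k" "(\<lambda>x. h' x v) = cprod f ys"
      using hs by blast
    have "(\<lambda>x. cprod f (Z v) x + a' x v *\<^sub>R k (f x) + h' x v) = cprod f ((\<lambda>x. a' x v, k) # Z v @ ys)"
      using ys(2) by (auto simp: cprod_def fun_eq_iff fun_cong[OF ys(2), simplified cprod_def])
    moreover have "\<forall>(a,k)\<in>set ((\<lambda>x. a' x v, k) # Z v @ ys). smooth_on U a \<and> smooth_on V k"
      using ys(1) zsm[of v] as sk by auto
    ultimately show "\<exists>ys. (\<forall>(a, k)\<in>set ys. smooth_on U a \<and> smooth_on V k) \<and>
          (\<lambda>x. cprod f (Z v) x + a' x v *\<^sub>R k (f x) + h' x v) = cprod f ys"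
      by blast
  qed
qed

lemma smooth_on_cprod:
  fixes f :: "'a::real_normed_vector \<Rightarrow> 'm::euclidean_space"
  assumes f: "smooth_on U f" and fV: "\<forall>x\<in>U. f x \<in> V"
  and "\<forall>(a,k)\<in>set xs. smooth_on U a \<and> smooth_on V k"
  shows "smooth_on U (cprod f xs)"
  using assms(3)
proof (coinduction arbitrary: xs rule: smooth_on.coinduct)
  case (smooth_on xs)
  from cprod_deriv[OF f fV this] obtain h' where "(\<forall>x\<in>U. (cprod f xs has_derivative h' x) (at x))"
    "(\<forall>v. \<exists>ys. (\<forall>(a,k)\<in>set ys. smooth_on U a \<and> smooth_on V k) \<and> (\<lambda>x. h' x v) = cprod f ys)" by blast
  then show ?case by (intro exI[of _ "cprod f xs"] exI[of _ h']) auto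
qed

lemma smooth_on_compose:
  fixes f :: "'a::real_normed_vector \<Rightarrow> 'm::euclidean_space"
  assumes f: "smooth_on U f" and g: "smooth_on V g" and fV: "\<forall>x\<in>U. f x \<in> V"
  shows "smooth_on U (\<lambda>x. g (f x))"
proof -
  have "smooth_on U (cprod f [(\<lambda>x. 1, g)])"
    by (rule smooth_on_cprod[OF f fV]) (auto simp: g smooth_on_const)
  then show ?thesis by (simp add: cprod_def)
qed

lemma smooth_on_local:
  assumes "\<forall>x. \<exists>S g. open S \<and> x \<in> S \<and> smooth_on UNIV g \<and> (\<forall>y\<in>S. f y = g y)"
  shows "smooth_on UNIV f"
  using assms
proof (coinduction arbitrary: f rule: smooth_on.coinduct)
  case (smooth_on f)
  have "\<exists>S g. \<forall>x. open (S x) \<and> x \<in> S x \<and> smooth_on UNIV (g x) \<and> (\<forall>y\<in>S x. f y = g x y)"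
    using smooth_on by (simp only: choice_iff)
  then obtain S g where Sg0: "\<forall>x. open (S x) \<and> x \<in> S x \<and> smooth_on UNIV (g x) \<and> (\<forall>y\<in>S x. f y = g x y)"
    by blast
  have Sg: "\<And>x. open (S x)" "\<And>x. x \<in> S x" "\<And>x. smooth_on UNIV (g x)"
    "\<And>x y. y \<in> S x \<Longrightarrow> f y = g x y"
    using Sg0 by blast+
  have "\<forall>x. \<exists>G. (\<forall>y. (g x has_derivative G y) (at y)) \<and> (\<forall>v. smooth_on UNIV (\<lambda>y. G y v))"
  proof
    fix x
    obtain G where "\<And>y. y \<in> UNIV \<Longrightarrow> (g x has_derivative G y) (at y)" "\<And>v. smooth_on UNIV (\<lambda>y. G y v)"
      using smooth_onD[OF Sg(3)[of x]] by blast
    then show "\<exists>G. (\<forall>y. (g x has_derivative G y) (at y)) \<and> (\<forall>v. smooth_on UNIV (\<lambda>y. G y v))"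
      by blast
  qed
  then have "\<exists>G. \<forall>x. (\<forall>y. (g x has_derivative G x y) (at y)) \<and> (\<forall>v. smooth_on UNIV (\<lambda>y. G x y v))"
    by (rule choice)
  then obtain G where Gd: "\<And>x y. (g x has_derivative G x y) (at y)"
    and Gs: "\<And>x v. smooth_on UNIV (\<lambda>y. G x y v)" by blast
  have fd: "(f has_derivative G x y) (at y)" if "y \<in> S x" for x y
  proof (rule has_derivative_transform_within_open[OF Gd Sg(1) that])
    fix z assume "z \<in> S x" then show "g x z = f z" using Sg(4) by metis
  qed
  define f' where "f' y = G y y" for y
  have fd': "(f has_derivative f' y) (at y)" for y
    unfolding f'_def by (rule fd[OF Sg(2)])
  have loc: "\<exists>Sa ga. open Sa \<and> x \<in> Sa \<and> smooth_on UNIV ga \<and> (\<forall>y\<in>Sa. f' y v = ga y)" for x v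
  proof -
      have "\<forall>y\<in>S x. f' y v = G x y v"
      proof
        fix y assume "y \<in> S x"
        have "f' y = G x y" by (rule has_derivative_unique[OF fd' fd[OF \<open>y \<in> S x\<close>]])
        then show "f' y v = G x y v" by simp
      qed
      then show "\<exists>Sa ga. open Sa \<and> x \<in> Sa \<and> smooth_on UNIV ga \<and> (\<forall>y\<in>Sa. f' y v = ga y)"
        using Sg(1,2) Gs[of x v] by (intro exI[of _ "S x"] exI[of _ "\<lambda>y. G x y v"]) simp
  qed
  show ?case
    apply (intro exI[of _ f] exI[of _ f'] conjI ballI allI)
      apply (rule refl)
     apply (rule fd')
    apply (rule disjI1)
    apply (rule exI[of _ "\<lambda>x. f' x v" for v])
    using loc by blast
qed
lemma DERIV_inverse_pow:
  assumes "x \<noteq> (0::real)"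
  shows "((\<lambda>x. inverse x ^ k) has_field_derivative ((- real k) * inverse x ^ Suc k)) (at x)"
proof -
  have "((\<lambda>x. inverse x ^ k) has_field_derivative (real k * inverse x ^ (k - Suc 0) * (- (inverse x ^ Suc (Suc 0))))) (at x)"
    by (rule DERIV_chain2[OF DERIV_pow DERIV_inverse[OF assms]])
  moreover have "real k * inverse x ^ (k - Suc 0) * (- (inverse x ^ Suc (Suc 0))) = (- real k) * inverse x ^ Suc k"
  proof (cases k)
    case (Suc m)
    then show ?thesis by (simp add: algebra_simps)
  qed simp
  ultimately show ?thesis by (simp only:)
qed

lemma smooth_on_inverse_pow: "smooth_on (-{0}) (\<lambda>x::real. c * inverse x ^ k)"
proof (coinduction arbitrary: c k rule: smooth_on.coinduct)
  case (smooth_on c k)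
  have d: "((\<lambda>x::real. c * inverse x ^ k) has_derivative (\<lambda>v. (v * (c * - real k)) * inverse x ^ Suc k)) (at x)"
    if "x \<in> -{0}" for x
  proof -
    have "x \<noteq> 0" using that by auto
    have "((\<lambda>x::real. c * inverse x ^ k) has_field_derivative c * ((- real k) * inverse x ^ Suc k)) (at x)"
      by (rule DERIV_cmult[OF DERIV_inverse_pow[OF \<open>x \<noteq> 0\<close>]])
    then show ?thesis unfolding has_field_derivative_def
      by (rule has_derivative_eq_rhs) (auto simp: fun_eq_iff algebra_simps)
  qed
  show ?case
  proof (intro exI[of _ "\<lambda>x::real. c * inverse x ^ k"] exI[of _ "\<lambda>x v. (v * (c * - real k)) * inverse x ^ Suc k"] conjI ballI allI disjI1)
    fix v :: real
    show "\<exists>c' k'. (\<lambda>x. v * (c * - real k) * inverse x ^ Suc k) = (\<lambda>x. c' * inverse x ^ k')"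
      by blast
  qed (rule refl, erule d)
qed

definition flatp :: "real poly \<Rightarrow> real \<Rightarrow> real" where
  "flatp p t = (if 0 < t then poly p (inverse t) * exp (- inverse t) else 0)"

definition flatq :: "real poly \<Rightarrow> real poly" where
  "flatq p = [:0,0,1:] * (p - pderiv p)"

lemma poly_div_exp_0: "((\<lambda>x::real. poly (p::real poly) x / exp x) \<longlongrightarrow> 0) at_top"
proof -
  have eq: "(\<lambda>x. poly p x / exp x) = (\<lambda>x. \<Sum>i\<le>degree p. coeff p i * (x ^ i / exp x))"
    by (simp add: poly_altdef divide_inverse mult.assoc sum_distrib_right fun_eq_iff)
  have "((\<lambda>x. \<Sum>i\<le>degree p. coeff p i * (x ^ i / exp x)) \<longlongrightarrow> 0) at_top"
    by (rule tendsto_null_sum) (rule tendsto_mult_right_zero[OF tendsto_power_div_exp_0])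
  then show ?thesis unfolding eq .
qed

lemma flat_deriv_pos:
  assumes t: "0 < t"
  shows "((\<lambda>t. poly p (inverse t) * exp (- inverse t)) has_real_derivative flatp (flatq p) t) (at t)"
proof -
  have tne: "t \<noteq> 0" using t by simp
  have D1: "((\<lambda>t. poly p (inverse t)) has_real_derivative poly (pderiv p) (inverse t) * (- (inverse t ^ Suc (Suc 0)))) (at t)"
    by (rule DERIV_chain2[OF poly_DERIV DERIV_inverse[OF tne]])
  have D2: "((\<lambda>t. exp (- inverse t)) has_real_derivative exp (- inverse t) * (- (- (inverse t ^ Suc (Suc 0))))) (at t)"
    by (rule DERIV_chain2[OF DERIV_exp DERIV_minus[OF DERIV_inverse[OF tne]]])
  have "((\<lambda>t. poly p (inverse t) * exp (- inverse t)) has_real_derivative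
      poly (pderiv p) (inverse t) * (- (inverse t ^ Suc (Suc 0))) * exp (- inverse t) +
      exp (- inverse t) * (- (- (inverse t ^ Suc (Suc 0)))) * poly p (inverse t)) (at t)"
    by (rule DERIV_mult[OF D1 D2])
  moreover have "poly (pderiv p) (inverse t) * (- (inverse t ^ Suc (Suc 0))) * exp (- inverse t) +
      exp (- inverse t) * (- (- (inverse t ^ Suc (Suc 0)))) * poly p (inverse t) = flatp (flatq p) t"
    using t by (simp add: flatp_def flatq_def algebra_simps power2_eq_square)
  ultimately show ?thesis by (simp only:)
qed

lemma flat_deriv: "(flatp p has_real_derivative flatp (flatq p) t) (at t)"
proof (cases "t > 0")
  case True
  show ?thesis
    by (rule has_field_derivative_transform_within_open[OF flat_deriv_pos[OF True], of "{0<..}"])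
       (use True in \<open>auto simp: flatp_def\<close>)
next
  case False
  show ?thesis
  proof (cases "t < 0")
    case True
    have "((\<lambda>t. 0) has_real_derivative flatp (flatq p) t) (at t)"
      using True DERIV_const[of 0] by (simp add: flatp_def)
    then show ?thesis
      by (rule has_field_derivative_transform_within_open[of _ _ _ "{..<0}"])
         (use True in \<open>auto simp: flatp_def\<close>)
  next
    case False
    with \<open>\<not> t > 0\<close> have t0: "t = 0" by simp
    have "((\<lambda>h. (flatp p (0 + h) - flatp p 0) / h) \<longlongrightarrow> 0) (at 0)"
      unfolding filterlim_at_split
    proof
      show "((\<lambda>h. (flatp p (0 + h) - flatp p 0) / h) \<longlongrightarrow> 0) (at_left 0)"
      proof (rule tendsto_eventually)
        show "\<forall>\<^sub>F h in at_left (0::real). (flatp p (0 + h) - flatp p 0) / h = 0"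
          unfolding eventually_at_left_field by (intro exI[of _ "-1"]) (auto simp: flatp_def)
      qed
    next
      have lim: "((\<lambda>h. poly (pCons 0 p) (inverse h) / exp (inverse h)) \<longlongrightarrow> 0) (at_right 0)"
        by (rule filterlim_compose[OF poly_div_exp_0 filterlim_inverse_at_top_right])
      show "((\<lambda>h. (flatp p (0 + h) - flatp p 0) / h) \<longlongrightarrow> 0) (at_right 0)"
      proof (rule Lim_transform_eventually[OF lim])
        show "\<forall>\<^sub>F h in at_right (0::real). poly (pCons 0 p) (inverse h) / exp (inverse h) = (flatp p (0 + h) - flatp p 0) / h"
          using eventually_at_right_less[of "0::real"] by eventually_elim
            (simp add: flatp_def exp_minus field_simps)
      qed
    qed
    then show ?thesis using t0 by (simp add: DERIV_def flatp_def)
  qed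
qed

lemma flatp_smult: "flatp (smult c q) t = c * flatp q t"
  by (simp add: flatp_def)

lemma smooth_flatp: "smooth_on UNIV (flatp p)"
proof (coinduction arbitrary: p rule: smooth_on.coinduct)
  case (smooth_on p)
  show ?case
    apply (intro exI[of _ "flatp p"] exI[of _ "\<lambda>t v. flatp (flatq p) t * v"] conjI ballI allI)
      apply (rule refl)
     apply (rule flat_deriv[unfolded has_field_derivative_def])
    apply (rule disjI1)
    apply (rule_tac x="smult v (flatq p)" in exI)
    apply (simp add: flatp_smult fun_eq_iff mult.commute)
    done
qed

definition bumpF :: "real \<Rightarrow> real" where "bumpF = flatp 1"

lemma bumpF_pos: "t > 0 \<Longrightarrow> bumpF t > 0" and bumpF_zero: "t \<le> 0 \<Longrightarrow> bumpF t = 0"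
  by (auto simp: bumpF_def flatp_def)

lemma bumpF_nonneg: "bumpF t \<ge> 0"
  by (cases "t > 0") (auto dest: bumpF_pos simp: bumpF_zero)

definition stp :: "real \<Rightarrow> real" where
  "stp t = bumpF t * inverse (bumpF t + bumpF (1 - t))"

lemma stp_denom_pos: "bumpF t + bumpF (1 - t) > 0"
proof (cases "t > 0")
  case True then show ?thesis using bumpF_pos[of t] bumpF_nonneg[of "1-t"] by simp
next
  case False then show ?thesis using bumpF_pos[of "1-t"] bumpF_nonneg[of t] by simp
qed

lemma smooth_stp: "smooth_on UNIV stp"
proof -
  have sF: "smooth_on UNIV bumpF" unfolding bumpF_def by (rule smooth_flatp)
  have s1: "smooth_on UNIV (\<lambda>t::real. 1 - t)" by (rule smooth_on_diff[OF smooth_on_const smooth_on_id])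
  have sF1: "smooth_on UNIV (\<lambda>t. bumpF (1 - t))"
    by (rule smooth_on_compose[OF s1 sF]) simp
  have sD: "smooth_on UNIV (\<lambda>t. bumpF t + bumpF (1 - t))" by (rule smooth_on_add[OF sF sF1])
  have "smooth_on UNIV (\<lambda>t. 1 * inverse (bumpF t + bumpF (1 - t)) ^ 1)"
    by (rule smooth_on_compose[OF sD smooth_on_inverse_pow])
       (use stp_denom_pos in \<open>auto simp: less_le\<close>)
  then have "smooth_on UNIV (\<lambda>t. inverse (bumpF t + bumpF (1 - t)))" by simp
  then show ?thesis unfolding stp_def[abs_def] by (rule smooth_on_mult[OF sF])
qed

lemma stp_zero: "t \<le> 0 \<Longrightarrow> stp t = 0"
  by (simp add: stp_def bumpF_zero)

lemma stp_one: "t \<ge> 1 \<Longrightarrow> stp t = 1"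
  using bumpF_pos[of t] by (simp add: stp_def bumpF_zero)

lemma stp_bounds: "0 \<le> stp t" "stp t \<le> 1"
  using stp_denom_pos[of t] bumpF_nonneg[of t] bumpF_nonneg[of "1-t"]
  by (auto simp: stp_def field_simps)

lemma continuous_stp: "continuous_on UNIV stp"
  by (rule smooth_on_continuous_on[OF smooth_stp])

definition conn :: "'a::real_normed_vector set \<Rightarrow> 'a \<Rightarrow> 'a \<Rightarrow> bool" where
  "conn N p q \<longleftrightarrow> (\<exists>c::real \<Rightarrow> 'a. smooth_on UNIV c \<and> range c \<subseteq> N \<and> (\<forall>\<tau>\<le>0. c \<tau> = p) \<and> (\<forall>\<tau>\<ge>1. c \<tau> = q))"

lemma smooth_affine: "smooth_on UNIV (\<lambda>t::real. a * t + b)"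
  by (intro smooth_on_add smooth_on_mult smooth_on_const smooth_on_id)

lemma smooth_comp_affine:
  assumes "smooth_on UNIV (c::real \<Rightarrow> 'a::real_normed_vector)"
  shows "smooth_on UNIV (\<lambda>t. c (a * t + b))"
  by (rule smooth_on_compose[OF smooth_affine assms]) simp

lemma conn_refl: "p \<in> N \<Longrightarrow> conn N p p"
  unfolding conn_def by (intro exI[of _ "\<lambda>t. p"]) (auto simp: smooth_on_const)

lemma conn_sym: fixes N :: "'a::real_normed_vector set" assumes "conn N p q" shows "conn N q p"
proof -
  obtain c :: "real \<Rightarrow> 'a" where c: "smooth_on UNIV c" "range c \<subseteq> N" "\<forall>\<tau>\<le>0. c \<tau> = p" "\<forall>\<tau>\<ge>1. c \<tau> = q"
    using assms unfolding conn_def by blast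
  have "smooth_on UNIV (\<lambda>t. c ((-1) * t + 1))" by (rule smooth_comp_affine[OF c(1)])
  then show ?thesis unfolding conn_def using c(2-4)
    by (intro exI[of _ "\<lambda>t. c ((-1) * t + 1)"]) auto
qed

lemma conn_trans: fixes N :: "'a::real_normed_vector set" assumes "conn N p q" "conn N q r" shows "conn N p r"
proof -
  obtain c1 :: "real \<Rightarrow> 'a" where c1: "smooth_on UNIV c1" "range c1 \<subseteq> N" "\<forall>\<tau>\<le>0. c1 \<tau> = p" "\<forall>\<tau>\<ge>1. c1 \<tau> = q"
    using assms(1) unfolding conn_def by blast
  obtain c2 :: "real \<Rightarrow> 'a" where c2: "smooth_on UNIV c2" "range c2 \<subseteq> N" "\<forall>\<tau>\<le>0. c2 \<tau> = q" "\<forall>\<tau>\<ge>1. c2 \<tau> = r"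
    using assms(2) unfolding conn_def by blast
  define c where "c t = (if t \<le> 1/2 then c1 (3 * t + 0) else c2 (3 * t + (-2)))" for t :: real
  have s1: "smooth_on UNIV (\<lambda>t. c1 (3 * t + 0))" by (rule smooth_comp_affine[OF c1(1)])
  have s2: "smooth_on UNIV (\<lambda>t. c2 (3 * t + (-2)))" by (rule smooth_comp_affine[OF c2(1)])
  have "smooth_on UNIV c"
  proof (rule smooth_on_local, rule allI)
    fix x :: real
    consider "x < 1/2" | "x = 1/2" | "x > 1/2" by linarith
    then show "\<exists>S g. open S \<and> x \<in> S \<and> smooth_on UNIV g \<and> (\<forall>y\<in>S. c y = g y)"
    proof cases
      case 1
      then show ?thesis using s1
        by (intro exI[of _ "{..<1/2}"] exI[of _ "\<lambda>t. c1 (3 * t + 0)"]) (auto simp: c_def)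
    next
      case 2
      have "\<forall>y\<in>{1/3<..<2/3}. c y = q"
        using c1(4) c2(3) by (auto simp: c_def)
      then show ?thesis using 2
        by (intro exI[of _ "{1/3<..<2/3}"] exI[of _ "\<lambda>t. q"]) (auto simp: smooth_on_const)
    next
      case 3
      then show ?thesis using s2
        by (intro exI[of _ "{1/2<..}"] exI[of _ "\<lambda>t. c2 (3 * t + (-2))"]) (auto simp: c_def)
    qed
  qed
  moreover have "range c \<subseteq> N" using c1(2) c2(2) by (auto simp: c_def)
  moreover have "\<forall>\<tau>\<le>0. c \<tau> = p" using c1(3) by (auto simp: c_def)
  moreover have "\<forall>\<tau>\<ge>1. c \<tau> = r" using c2(4) by (auto simp: c_def)
  ultimately show ?thesis unfolding conn_def by blast
qed

lemma chart_conn: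
  fixes N :: "'a::euclidean_space set"
  assumes N: "smooth_submanifold N" and p: "p \<in> N"
  shows "\<exists>W. open W \<and> p \<in> W \<and> (\<forall>q\<in>N \<inter> W. conn N p q)"
proof -
  have "\<exists>U V (\<phi>::'a\<Rightarrow>'a) \<psi> L. open U \<and> p \<in> U \<and> open V \<and>
        smooth_on U \<phi> \<and> smooth_on V \<psi> \<and> \<phi> ` U = V \<and>
        (\<forall>x\<in>U. \<psi> (\<phi> x) = x) \<and> (\<forall>y\<in>V. \<phi> (\<psi> y) = y) \<and>
        subspace L \<and> \<phi> ` (N \<inter> U) = L \<inter> V"
    using N p unfolding smooth_submanifold_def by (rule bspec)
  then obtain U V L :: "'a set" and \<phi> \<psi> :: "'a \<Rightarrow> 'a" where U: "open U" "p \<in> U" and V: "open V" and s\<phi>: "smooth_on U \<phi>"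
    and s\<psi>: "smooth_on V \<psi>" and im: "\<phi> ` U = V" and inv1: "\<forall>x\<in>U. \<psi> (\<phi> x) = x"
    and L: "subspace L" and sl: "\<phi> ` (N \<inter> U) = L \<inter> V"
    by blast
  have cont: "continuous_on U \<phi>" by (rule smooth_on_continuous_on[OF s\<phi>])
  have pV: "\<phi> p \<in> V" using im U by blast
  obtain r where r: "r > 0" "ball (\<phi> p) r \<subseteq> V" using V pV open_contains_ball by blast
  define W where "W = U \<inter> \<phi> -` ball (\<phi> p) r"
  have oW: "open W" unfolding W_def by (rule continuous_open_preimage[OF cont U(1) open_ball])
  have pW: "p \<in> W" using U r by (auto simp: W_def)
  have pL: "\<phi> p \<in> L" using sl p U by blast
  have "conn N p q" if q: "q \<in> N \<inter> W" for q
  proof -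
    have qU: "q \<in> U" and qb: "\<phi> q \<in> ball (\<phi> p) r" using q by (auto simp: W_def)
    have qL: "\<phi> q \<in> L" using sl q qU by blast
    define l where "l t = \<phi> p + stp t *\<^sub>R (\<phi> q - \<phi> p)" for t
    have lb: "l t \<in> ball (\<phi> p) r" for t
    proof -
      have "dist (\<phi> p) (l t) = stp t * norm (\<phi> q - \<phi> p)"
        using stp_bounds[of t] by (simp add: l_def dist_norm)
      also have "\<dots> \<le> norm (\<phi> q - \<phi> p)"
        using stp_bounds[of t] by (simp add: mult_left_le_one_le)
      also have "\<dots> < r" using qb by (simp add: dist_norm norm_minus_commute)
      finally show ?thesis by simp
    qed
    have lL: "l t \<in> L" for t
      unfolding l_def using L pL qL by (intro subspace_add subspace_scale subspace_diff) auto
    have lN: "\<psi> (l t) \<in> N" for t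
    proof -
      have "l t \<in> L \<inter> V" using lb[of t] lL[of t] r(2) by blast
      then have "l t \<in> \<phi> ` (N \<inter> U)" using sl by simp
      then obtain y where y: "y \<in> N \<inter> U" "l t = \<phi> y" by blast
      then have "\<psi> (l t) = y" using inv1 by simp
      then show ?thesis using y by simp
    qed
    have sl: "smooth_on UNIV l"
      unfolding l_def[abs_def]
      by (intro smooth_on_add smooth_on_const smooth_on_scaleR smooth_stp)
    have sc: "smooth_on UNIV (\<lambda>t. \<psi> (l t))"
      by (rule smooth_on_compose[OF sl s\<psi>]) (use lb r in blast)
    show ?thesis unfolding conn_def
    proof (intro exI[of _ "\<lambda>t. \<psi> (l t)"] conjI allI impI)
      show "range (\<lambda>t. \<psi> (l t)) \<subseteq> N" using lN by auto
      fix \<tau> :: real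
      show "\<tau> \<le> 0 \<Longrightarrow> \<psi> (l \<tau>) = p" using inv1 U by (simp add: l_def stp_zero)
      show "\<tau> \<ge> 1 \<Longrightarrow> \<psi> (l \<tau>) = q" using inv1 qU by (simp add: l_def stp_one)
    qed (rule sc)
  qed
  then show ?thesis using oW pW by blast
qed

lemma submanifold_conn:
  fixes N :: "'a::euclidean_space set"
  assumes N: "smooth_submanifold N" and cN: "connected N" and p0: "p0 \<in> N" and q: "q \<in> N"
  shows "conn N p0 q"
proof -
  define A where "A = {q\<in>N. conn N p0 q}"
  have opA: "openin (top_of_set N) A"
  proof (subst openin_subopen, intro ballI)
    fix x assume "x \<in> A"
    then have x: "x \<in> N" "conn N p0 x" by (auto simp: A_def)
    obtain W where W: "open W" "x \<in> W" "\<forall>q\<in>N \<inter> W. conn N x q" using chart_conn[OF N x(1)] by blast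
    have "N \<inter> W \<subseteq> A" using W(3) x conn_trans[of N p0 x] by (auto simp: A_def)
    moreover have "openin (top_of_set N) (N \<inter> W)" using W(1) by (simp add: openin_open_Int)
    ultimately show "\<exists>T. openin (top_of_set N) T \<and> x \<in> T \<and> T \<subseteq> A" using W x by blast
  qed
  have opB: "openin (top_of_set N) (N - A)"
  proof (subst openin_subopen, intro ballI)
    fix x assume "x \<in> N - A"
    then have x: "x \<in> N" "\<not> conn N p0 x" by (auto simp: A_def)
    obtain W where W: "open W" "x \<in> W" "\<forall>q\<in>N \<inter> W. conn N x q" using chart_conn[OF N x(1)] by blast
    have "N \<inter> W \<subseteq> N - A"
    proof
      fix y assume y: "y \<in> N \<inter> W"
      have "\<not> conn N p0 y"
      proof
        assume "conn N p0 y"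
        moreover have "conn N y x" using W(3) y conn_sym by blast
        ultimately show False using x(2) conn_trans by blast
      qed
      then show "y \<in> N - A" using y by (auto simp: A_def)
    qed
    moreover have "openin (top_of_set N) (N \<inter> W)" using W(1) by (simp add: openin_open_Int)
    ultimately show "\<exists>T. openin (top_of_set N) T \<and> x \<in> T \<and> T \<subseteq> N - A" using W x by blast
  qed
  have clA: "closedin (top_of_set N) A"
    using opB by (simp add: closedin_def A_def)
  have "A = {} \<or> A = N" using cN opA clA unfolding connected_clopen by blast
  moreover have "p0 \<in> A" using p0 conn_refl by (auto simp: A_def)
  ultimately show ?thesis using q by (auto simp: A_def)
qed

lemma cont_sq_int:
  fixes f :: "real \<Rightarrow> 'a::euclidean_space"
  assumes "continuous_on UNIV f"
  shows "square_integrable f"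
  unfolding square_integrable_def
proof
  show "f \<in> borel_measurable lborel"
    using borel_measurable_continuous_onI[OF assms] by simp
  show "set_integrable lborel {0..1} (\<lambda>t. (norm (f t))\<^sup>2)"
    by (rule borel_integrable_atLeastAtMost')
       (intro continuous_intros continuous_on_subset[OF assms]; simp)
qed

lemma sq_sum_le: "(a + b)\<^sup>2 \<le> 2 * a\<^sup>2 + 2 * (b::real)\<^sup>2"
  using sum_squares_bound[of a b] by (simp add: power2_sum)

lemma sq_diff_integrable:
  fixes f g :: "real \<Rightarrow> 'a::euclidean_space"
  assumes f: "square_integrable f" and g: "square_integrable g"
  shows "set_integrable lborel {0..1} (\<lambda>t. (norm (f t - g t))\<^sup>2)"
proof -
  have fm: "f \<in> borel_measurable lborel" and fi: "set_integrable lborel {0..1} (\<lambda>t. (norm (f t))\<^sup>2)"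
    using f by (auto simp: square_integrable_def)
  have gm: "g \<in> borel_measurable lborel" and gi: "set_integrable lborel {0..1} (\<lambda>t. (norm (g t))\<^sup>2)"
    using g by (auto simp: square_integrable_def)
  have maj: "integrable lborel (\<lambda>t. 2 * (indicator {0..1} t *\<^sub>R (norm (f t))\<^sup>2) + 2 * (indicator {0..1} t *\<^sub>R (norm (g t))\<^sup>2))"
    using fi gi unfolding set_integrable_def by (intro Bochner_Integration.integrable_add integrable_mult_right)
  show ?thesis
    unfolding set_integrable_def
  proof (rule Bochner_Integration.integrable_bound[OF maj])
    show "(\<lambda>t. indicat_real {0..1} t *\<^sub>R (norm (f t - g t))\<^sup>2) \<in> borel_measurable lborel"
    proof -
      have "(\<lambda>x. f x - g x) \<in> borel_measurable lborel" by (rule borel_measurable_diff[OF fm gm])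
      then have "(\<lambda>x. norm (f x - g x)) \<in> borel_measurable lborel" by measurable
      then show ?thesis by (intro borel_measurable_scaleR borel_measurable_indicator borel_measurable_power) simp_all
    qed
    show "AE t in lborel. norm (indicat_real {0..1} t *\<^sub>R (norm (f t - g t))\<^sup>2)
        \<le> norm (2 * (indicat_real {0..1} t *\<^sub>R (norm (f t))\<^sup>2) + 2 * (indicat_real {0..1} t *\<^sub>R (norm (g t))\<^sup>2))"
    proof (rule AE_I2)
      fix t
      have "(norm (f t - g t))\<^sup>2 \<le> (norm (f t) + norm (g t))\<^sup>2"
        by (intro power_mono norm_triangle_ineq4) simp
      also have "\<dots> \<le> 2 * (norm (f t))\<^sup>2 + 2 * (norm (g t))\<^sup>2"
        by (rule sq_sum_le)
      finally have *: "(norm (f t - g t))\<^sup>2 \<le> 2 * (norm (f t))\<^sup>2 + 2 * (norm (g t))\<^sup>2" .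
      then show "norm (indicat_real {0..1} t *\<^sub>R (norm (f t - g t))\<^sup>2)
        \<le> norm (2 * (indicat_real {0..1} t *\<^sub>R (norm (f t))\<^sup>2) + 2 * (indicat_real {0..1} t *\<^sub>R (norm (g t))\<^sup>2))"
        by (auto simp: indicator_def)
    qed
  qed
qed

lemma LINT_nonneg: fixes f g :: "real \<Rightarrow> 'a::real_normed_vector" shows "0 \<le> (LINT t:{0..1}|lborel. (norm (f t - g t))\<^sup>2)"
  unfolding set_lebesgue_integral_def by (rule integral_nonneg_AE) (simp add: indicator_def)

lemma L2_dist_sq: fixes f g :: "real \<Rightarrow> 'a::euclidean_space" shows "(L2_dist f g)\<^sup>2 = (LINT t:{0..1}|lborel. (norm (f t - g t))\<^sup>2)"
  unfolding L2_dist_def using LINT_nonneg[of f g] by simp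

lemma L2_dist_nonneg: fixes f g :: "real \<Rightarrow> 'a::euclidean_space" shows "0 \<le> L2_dist f g"
  unfolding L2_dist_def using LINT_nonneg[of f g] by simp

lemma L2_dist_self: "L2_dist f f = 0"
  unfolding L2_dist_def by simp

lemma L2_tri:
  fixes f g h :: "real \<Rightarrow> 'a::euclidean_space"
  assumes f: "square_integrable f" and g: "square_integrable g" and h: "square_integrable h"
  shows "(L2_dist f h)\<^sup>2 \<le> 2 * (L2_dist f g)\<^sup>2 + 2 * (L2_dist g h)\<^sup>2"
proof -
  have i1: "set_integrable lborel {0..1} (\<lambda>t. (norm (f t - g t))\<^sup>2)" by (rule sq_diff_integrable[OF f g])
  have i2: "set_integrable lborel {0..1} (\<lambda>t. (norm (g t - h t))\<^sup>2)" by (rule sq_diff_integrable[OF g h])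
  have i3: "set_integrable lborel {0..1} (\<lambda>t. (norm (f t - h t))\<^sup>2)" by (rule sq_diff_integrable[OF f h])
  have "(LINT t:{0..1}|lborel. (norm (f t - h t))\<^sup>2) \<le>
        (LINT t:{0..1}|lborel. 2 * (norm (f t - g t))\<^sup>2 + 2 * (norm (g t - h t))\<^sup>2)"
  proof (rule set_integral_mono[OF i3])
    show "set_integrable lborel {0..1} (\<lambda>t. 2 * (norm (f t - g t))\<^sup>2 + 2 * (norm (g t - h t))\<^sup>2)"
      using i1 i2 by (intro set_integral_add(1) set_integrable_mult_right)
    fix t
    have "(norm (f t - h t))\<^sup>2 \<le> (norm (f t - g t) + norm (g t - h t))\<^sup>2"
      by (intro power_mono) (auto intro: norm_diff_triangle_le)
    also have "\<dots> \<le> 2 * (norm (f t - g t))\<^sup>2 + 2 * (norm (g t - h t))\<^sup>2"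
      by (rule sq_sum_le)
    finally show "(norm (f t - h t))\<^sup>2 \<le> 2 * (norm (f t - g t))\<^sup>2 + 2 * (norm (g t - h t))\<^sup>2" .
  qed
  also have "\<dots> = 2 * (LINT t:{0..1}|lborel. (norm (f t - g t))\<^sup>2) + 2 * (LINT t:{0..1}|lborel. (norm (g t - h t))\<^sup>2)"
    using i1 i2 by (simp add: set_integral_add(2) set_integrable_mult_right set_integral_mult_right)
  finally show ?thesis by (simp add: L2_dist_sq)
qed


lemma L2_dist_le_unif:
  fixes f g :: "real \<Rightarrow> 'a::euclidean_space"
  assumes f: "continuous_on UNIV f" and g: "continuous_on UNIV g" and e: "0 \<le> \<eta>"
    and b: "\<forall>t\<in>{0..1}. norm (f t - g t) \<le> \<eta>"
  shows "L2_dist f g \<le> \<eta>"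
proof -
  have i: "set_integrable lborel {0..1} (\<lambda>t. (norm (f t - g t))\<^sup>2)"
    by (rule sq_diff_integrable[OF cont_sq_int[OF f] cont_sq_int[OF g]])
  have ic: "set_integrable lborel {0..1} (\<lambda>t::real. \<eta>\<^sup>2)"
    by (rule borel_integrable_atLeastAtMost') (rule continuous_on_const)
  have "(LINT t:{0..1}|lborel. (norm (f t - g t))\<^sup>2) \<le> (LINT t:{0..1::real}|lborel. \<eta>\<^sup>2)"
  proof (rule set_integral_mono)
    show "set_integrable lborel {0..1} (\<lambda>t. (norm (f t - g t))\<^sup>2)" by (rule i)
    show "set_integrable lborel {0..1} (\<lambda>t::real. \<eta>\<^sup>2)" by (rule ic)
    fix t :: real assume "t \<in> {0..1}"
    then show "(norm (f t - g t))\<^sup>2 \<le> \<eta>\<^sup>2" using b by (intro power_mono) auto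
  qed
  also have "\<dots> = \<eta>\<^sup>2"
    using set_borel_integral_eq_integral(2)[OF ic] by simp
  finally have "(LINT t:{0..1}|lborel. (norm (f t - g t))\<^sup>2) \<le> \<eta>\<^sup>2" .
  then have "L2_dist f g \<le> sqrt (\<eta>\<^sup>2)" unfolding L2_dist_def by (rule real_sqrt_le_mono)
  then show ?thesis using e by simp
qed

lemma L2_small_set:
  fixes f g :: "real \<Rightarrow> 'a::euclidean_space"
  assumes f: "continuous_on UNIV f" and g: "continuous_on UNIV g" and a: "0 \<le> a"
    and K: "\<forall>t\<in>{0..1}. norm (f t - g t) \<le> K" and eq: "\<forall>t\<in>{a..1-a}. f t = g t"
  shows "(LINT t:{0..1}|lborel. (norm (f t - g t))\<^sup>2) \<le> K\<^sup>2 * (2 * a)"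
proof -
  define B where "B = {0..a} \<union> {1-a..1::real}"
  have i: "set_integrable lborel {0..1} (\<lambda>t. (norm (f t - g t))\<^sup>2)"
    by (rule sq_diff_integrable[OF cont_sq_int[OF f] cont_sq_int[OF g]])
  have Bs: "B \<in> sets lborel" unfolding B_def by simp
  have Bfin: "emeasure lborel B < \<infinity>"
    unfolding B_def by (intro emeasure_bounded_finite) (simp add: bounded_Un compact_imp_bounded)
  have iB: "integrable lborel (\<lambda>t. K\<^sup>2 * indicator B t)"
    by (intro integrable_mult_right integrable_real_indicator Bs Bfin)
  have "(LINT t:{0..1}|lborel. (norm (f t - g t))\<^sup>2) = (LINT t|lborel. indicator {0..1} t *\<^sub>R (norm (f t - g t))\<^sup>2)"
    by (simp add: set_lebesgue_integral_def)
  also have "\<dots> \<le> (LINT t|lborel. K\<^sup>2 * indicator B t)"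
  proof (rule integral_mono[OF i[unfolded set_integrable_def] iB])
    fix t :: real
    show "indicator {0..1} t *\<^sub>R (norm (f t - g t))\<^sup>2 \<le> K\<^sup>2 * indicator B t"
    proof (cases "t \<in> {0..1}")
      case False then show ?thesis by (auto simp: indicator_def)
    next
      case True
      show ?thesis
      proof (cases "t \<in> B")
        case True
        have "(norm (f t - g t))\<^sup>2 \<le> K\<^sup>2" using K \<open>t \<in> {0..1}\<close> by (intro power_mono) auto
        then show ?thesis using True \<open>t \<in> {0..1}\<close> by (simp add: indicator_def)
      next
        case False
        then have "t \<in> {a..1-a}" using \<open>t \<in> {0..1}\<close> by (auto simp: B_def)
        then show ?thesis using eq False by (simp add: indicator_def)
      qed
    qed
  qed
  also have "\<dots> = K\<^sup>2 * measure lborel B"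
    by simp
  also have "\<dots> \<le> K\<^sup>2 * (2 * a)"
  proof (rule mult_left_mono)
    have "measure lborel B \<le> measure lborel {0..a} + measure lborel {1-a..1::real}"
      unfolding B_def by (rule measure_Un_le) simp_all
    also have "\<dots> = 2 * a" using a by simp
    finally show "measure lborel B \<le> 2 * a" .
  qed simp
  finally show ?thesis .
qed

definition rho :: "real \<Rightarrow> real \<Rightarrow> real" where
  "rho s x = x * stp ((2/s) * x + (-1)) * (1 - stp ((2/s) * x + 2 * (s - 1) / s))"

lemma rho_zero1: assumes "0 < s" "x \<le> s/2" shows "rho s x = 0"
proof -
  have "(2/s) * x + (-1) \<le> 0" using assms by (simp add: field_simps)
  then show ?thesis by (simp add: rho_def stp_zero)
qed

lemma rho_zero2: assumes "0 < s" "x \<ge> 1 - s/2" shows "rho s x = 0"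
proof -
  have "(2/s) * x + 2 * (s - 1) / s \<ge> 1" using assms by (simp add: field_simps)
  then show ?thesis by (simp add: rho_def stp_one)
qed

lemma rho_id: assumes "0 < s" "s \<le> x" "x \<le> 1 - s" shows "rho s x = x"
proof -
  have "(2/s) * x + (-1) \<ge> 1" using assms by (simp add: field_simps)
  moreover have "(2/s) * x + 2 * (s - 1) / s \<le> 0" using assms by (simp add: field_simps)
  ultimately show ?thesis by (simp add: rho_def stp_zero stp_one)
qed

lemma smooth_rho: "smooth_on UNIV (rho s)"
  unfolding rho_def[abs_def]
  by (intro smooth_on_mult smooth_on_id smooth_on_diff smooth_on_const smooth_comp_affine[OF smooth_stp])

lemma cont_rho: "continuous_on ({0<..} \<times> UNIV) (\<lambda>z. rho (fst z) (snd z))"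
  unfolding rho_def
  by (intro continuous_intros continuous_on_compose2[OF continuous_stp]) auto

lemma smooth_per:
  fixes B :: "real \<Rightarrow> 'a::real_normed_vector"
  assumes sB: "smooth_on UNIV B" and \<eta>: "0 < \<eta>" "\<eta> \<le> 1/2"
    and B0: "\<forall>x\<le>\<eta>. B x = b" and B1: "\<forall>x\<ge>1-\<eta>. B x = b"
  shows "smooth_on UNIV (\<lambda>t. B (frac t))"
proof (rule smooth_on_local, rule allI)
  fix t :: real
  show "\<exists>S g. open S \<and> t \<in> S \<and> smooth_on UNIV g \<and> (\<forall>y\<in>S. B (frac y) = g y)"
  proof (cases "t \<in> \<int>")
    case True
    then obtain k where k: "t = of_int k" by (auto elim: Ints_cases)
    have "B (frac y) = b" if y: "y \<in> {t-\<eta><..<t+\<eta>}" for y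
    proof (cases "y \<ge> t")
      case True
      have "\<lfloor>y\<rfloor> = k" using y True \<eta> k by (intro floor_unique) auto
      then have "frac y \<le> \<eta>" using y k by (simp add: frac_def)
      then show ?thesis using B0 by blast
    next
      case False
      have "\<lfloor>y\<rfloor> = k - 1" using y False \<eta> k by (intro floor_unique) auto
      then have "frac y \<ge> 1 - \<eta>" using y k by (simp add: frac_def)
      then show ?thesis using B1 by blast
    qed
    then show ?thesis using \<eta>
      by (intro exI[of _ "{t-\<eta><..<t+\<eta>}"] exI[of _ "\<lambda>y. b"]) (auto simp: smooth_on_const)
  next
    case False
    define k where "k = \<lfloor>t\<rfloor>"
    have tk: "of_int k < t" "t < of_int k + 1"
      using False of_int_floor_le[of t] floor_less_iff[of t] real_of_int_floor_add_one_gt[of t]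
      unfolding k_def by (metis Ints_of_int order_le_less) auto
    have "B (frac y) = B (1 * y + (- of_int k))" if "y \<in> {of_int k<..<of_int k + 1}" for y
    proof -
      have "\<lfloor>y\<rfloor> = k" using that by (intro floor_unique) auto
      then show ?thesis by (simp add: frac_def)
    qed
    moreover have "smooth_on UNIV (\<lambda>y. B (1 * y + (- of_int k)))" by (rule smooth_comp_affine[OF sB])
    ultimately show ?thesis using tk
      by (intro exI[of _ "{of_int k<..<of_int k + 1}"] exI[of _ "\<lambda>y. B (1 * y + (- of_int k))"]) auto
  qed
qed

lemma periodic_int:
  fixes \<gamma> :: "real \<Rightarrow> 'a"
  assumes p: "\<forall>t. \<gamma> (t + 1) = \<gamma> t"
  shows "\<gamma> (t + of_int k) = \<gamma> t"
proof -
  have n: "\<gamma> (t + real n) = \<gamma> t" for t n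
  proof (induction n)
    case 0 show ?case by simp
  next
    case (Suc n)
    have "\<gamma> (t + real (Suc n)) = \<gamma> ((t + real n) + 1)" by (simp add: algebra_simps)
    also have "\<dots> = \<gamma> (t + real n)" using p by blast
    also have "\<dots> = \<gamma> t" by (rule Suc.IH)
    finally show ?case .
  qed
  show ?thesis
  proof (cases "k \<ge> 0")
    case True
    then show ?thesis using n[of t "nat k"] by simp
  next
    case False
    then show ?thesis using n[of "t + of_int k" "nat (-k)"] by simp
  qed
qed

lemma periodic_frac:
  fixes \<gamma> :: "real \<Rightarrow> 'a"
  assumes p: "\<forall>t. \<gamma> (t + 1) = \<gamma> t"
  shows "\<gamma> (frac t) = \<gamma> t"
  using periodic_int[OF p, of "frac t" "\<lfloor>t\<rfloor>"] by (simp add: frac_def)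

lemma periodic_bounded:
  fixes \<gamma> :: "real \<Rightarrow> 'a::real_normed_vector"
  assumes c: "continuous_on UNIV \<gamma>" and p: "\<forall>t. \<gamma> (t + 1) = \<gamma> t"
  shows "\<exists>M\<ge>0. \<forall>t. norm (\<gamma> t) \<le> M"
proof -
  have "compact (\<gamma> ` {0..1})" by (rule compact_continuous_image[OF continuous_on_subset[OF c]]) auto
  then obtain M where M: "\<forall>x\<in>\<gamma> ` {0..1}. norm x \<le> M" using compact_imp_bounded bounded_iff by metis
  have "norm (\<gamma> t) \<le> M" for t
  proof -
    have "frac t \<in> {0..1}" using frac_lt_1[of t] frac_ge_0[of t] by auto
    then have "norm (\<gamma> (frac t)) \<le> M" using M by auto
    then show ?thesis using periodic_frac[OF p] by simp
  qed
  moreover have "0 \<le> M" using M[rule_format, of "\<gamma> 0"] by (auto intro: order_trans[OF norm_ge_zero])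
  ultimately show ?thesis by blast
qed

lemma curve_bounded:
  fixes c :: "real \<Rightarrow> 'a::real_normed_vector"
  assumes cc: "continuous_on UNIV c" and c0: "\<forall>\<tau>\<le>0. c \<tau> = p" and c1: "\<forall>\<tau>\<ge>1. c \<tau> = q"
  shows "\<exists>M\<ge>0. \<forall>t. norm (c t) \<le> M"
proof -
  have "compact (c ` {0..1})" by (rule compact_continuous_image[OF continuous_on_subset[OF cc]]) auto
  then obtain M where M: "\<forall>x\<in>c ` {0..1}. norm x \<le> M" using compact_imp_bounded bounded_iff by metis
  have "norm (c t) \<le> M" for t
  proof -
    have "c t = c (max 0 (min 1 t))" using c0 c1 by (cases "t \<le> 0"; cases "t \<ge> 1") auto
    moreover have "max 0 (min 1 t) \<in> {0..1}" by auto
    ultimately show ?thesis using M by auto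
  qed
  moreover have "0 \<le> M" using M[rule_format, of "c 0"] by (auto intro: order_trans[OF norm_ge_zero])
  ultimately show ?thesis by blast
qed

lemma smooth_loopsD:
  assumes "\<gamma> \<in> smooth_loops N"
  shows "smooth_on UNIV \<gamma>" "\<forall>t. \<gamma> (t + 1) = \<gamma> t" "range \<gamma> \<subseteq> N"
  using assms by (auto simp: smooth_loops_def)

lemma smooth_loop_L2:
  fixes N :: "'a::euclidean_space set"
  assumes "\<gamma> \<in> smooth_loops N"
  shows "\<gamma> \<in> L2_loops N"
proof -
  have "square_integrable \<gamma>"
    by (rule cont_sq_int[OF smooth_on_continuous_on[OF smooth_loopsD(1)[OF assms]]])
  then show ?thesis unfolding L2_loops_def L2_closure_def using assms L2_dist_self[of \<gamma>] by (auto intro: bexI[of _ \<gamma>])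
qed

lemma rho_one: "rho 1 x = 0"
  by (cases "x \<le> 1/2") (auto intro: rho_zero1 rho_zero2)

lemma rho_loop:
  fixes N :: "'a::euclidean_space set"
  assumes \<gamma>: "\<gamma> \<in> smooth_loops N" and s: "0 < s" "s \<le> 1"
  shows "(\<lambda>t. \<gamma> (rho s (frac t))) \<in> smooth_loops N"
proof -
  note g = smooth_loopsD[OF \<gamma>]
  have sB: "smooth_on UNIV (\<lambda>x. \<gamma> (rho s x))"
    by (rule smooth_on_compose[OF smooth_rho g(1)]) simp
  have "smooth_on UNIV (\<lambda>t. \<gamma> (rho s (frac t)))"
    by (rule smooth_per[OF sB, of "s/2" "\<gamma> 0"]) (use s in \<open>auto simp: rho_zero1 rho_zero2\<close>)
  moreover have "\<forall>t. \<gamma> (rho s (frac (t + 1))) = \<gamma> (rho s (frac t))" by (simp add: frac_1_eq)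
  moreover have "range (\<lambda>t. \<gamma> (rho s (frac t))) \<subseteq> N" using g(3) by auto
  ultimately show ?thesis by (simp add: smooth_loops_def)
qed

lemma frac_in01: "frac t \<in> {0..1}"
  using frac_lt_1[of t] frac_ge_0[of t] by auto

lemma part2:
  fixes N :: "'a::euclidean_space set"
  assumes \<gamma>: "\<gamma> \<in> smooth_loops N"
  shows "\<exists>p \<sigma>. piecewise_smooth_loop N \<sigma> \<and> null_homotopic_loop N \<sigma> \<and> L2_path_connects N p \<gamma> \<sigma>"
proof -
  note g = smooth_loopsD[OF \<gamma>]
  have cg: "continuous_on UNIV \<gamma>" by (rule smooth_on_continuous_on[OF g(1)])
  obtain M where M: "M \<ge> 0" "\<And>t. norm (\<gamma> t) \<le> M" using periodic_bounded[OF cg g(2)] by blast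
  define q where "q s = (if s = 0 then \<gamma> else (\<lambda>t. \<gamma> (rho s (frac t))))" for s
  define \<sigma> where "\<sigma> = (\<lambda>t::real. \<gamma> 0)"
  have g0N: "\<gamma> 0 \<in> N" using g(3) by auto
  have qsl: "q s \<in> smooth_loops N" if "s \<in> {0..1}" for s
    using that \<gamma> rho_loop[OF \<gamma>, of s] by (auto simp: q_def)
  have qc: "continuous_on UNIV (q s)" if "s \<in> {0..1}" for s
    by (rule smooth_on_continuous_on[OF smooth_loopsD(1)[OF qsl[OF that]]])
  have q0: "q 0 = \<gamma>" by (simp add: q_def)
  have q1: "q 1 = \<sigma>" by (simp add: q_def \<sigma>_def rho_one)
  have cont: "\<exists>d>0. \<forall>s'\<in>{0..1}. \<bar>s' - s\<bar> < d \<longrightarrow> L2_dist (q s') (q s) < e"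
    if s: "s \<in> {0..1}" and e: "e > 0" for s e
  proof (cases "s = 0")
    case True
    define K where "K = 2 * M"
    define d where "d = e\<^sup>2 / (8 * K\<^sup>2 + 1)"
    have d: "d > 0" using e by (simp add: d_def add_nonneg_pos)
    have "L2_dist (q s') (q s) < e" if s': "s' \<in> {0..1}" "\<bar>s' - s\<bar> < d" for s'
    proof (cases "s' = 0")
      case True then show ?thesis using \<open>s = 0\<close> e by (simp add: L2_dist_self)
    next
      case False
      then have s'p: "0 < s'" "s' < d" using s' \<open>s = 0\<close> by auto
      have "(LINT t:{0..1}|lborel. (norm (q s' t - \<gamma> t))\<^sup>2) \<le> K\<^sup>2 * (2 * s')"
      proof (rule L2_small_set[OF qc[OF s'(1)] cg])
        show "0 \<le> s'" using s'p by simp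
        show "\<forall>t\<in>{0..1}. norm (q s' t - \<gamma> t) \<le> K"
        proof
          fix t :: real
          have "norm (q s' t - \<gamma> t) \<le> norm (q s' t) + norm (\<gamma> t)" by (rule norm_triangle_ineq4)
          also have "\<dots> \<le> M + M" using M False by (intro add_mono) (auto simp: q_def)
          finally show "norm (q s' t - \<gamma> t) \<le> K" by (simp add: K_def)
        qed
        show "\<forall>t\<in>{s'..1 - s'}. q s' t = \<gamma> t"
        proof
          fix t assume t: "t \<in> {s'..1 - s'}"
          then have "frac t = t" using s'p by (intro frac_eq_id) auto
          then show "q s' t = \<gamma> t" using t s'p False by (simp add: q_def rho_id)
        qed
      qed
      also have "\<dots> < e\<^sup>2"
      proof -
        have "K\<^sup>2 * (2 * s') \<le> K\<^sup>2 * (2 * d)" using s'p by (intro mult_left_mono) auto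
        also have "\<dots> = e\<^sup>2 * (2 * K\<^sup>2 / (8 * K\<^sup>2 + 1))" by (simp add: d_def field_simps)
        also have "\<dots> < e\<^sup>2 * 1"
        proof (intro mult_strict_left_mono)
          have k: "0 \<le> K\<^sup>2" by simp
          then have "0 < 8 * K\<^sup>2 + 1" by linarith
          moreover have "2 * K\<^sup>2 < 8 * K\<^sup>2 + 1" using k by linarith
          ultimately show "2 * K\<^sup>2 / (8 * K\<^sup>2 + 1) < 1" by (simp only: divide_less_eq_1_pos)
        qed (use e in simp)
        finally show ?thesis by simp
      qed
      finally have "L2_dist (q s') \<gamma> < sqrt (e\<^sup>2)" unfolding L2_dist_def by (rule real_sqrt_less_mono)
      then show ?thesis using e \<open>s = 0\<close> q0 by simp
    qed
    then show ?thesis using d by blast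
  next
    case False
    then have sp: "0 < s" "s \<le> 1" using s by auto
    define KS where "KS = {s/2..1} \<times> {0..1::real}"
    define \<Phi> where "\<Phi> z = \<gamma> (rho (fst z) (snd z))" for z
    have cK: "compact KS" unfolding KS_def by (intro compact_Times compact_Icc)
    have cPhi: "continuous_on KS \<Phi>"
      unfolding \<Phi>_def
    proof (rule continuous_on_compose2[OF cg continuous_on_subset[OF cont_rho]])
      show "KS \<subseteq> {0<..} \<times> UNIV" using sp by (auto simp: KS_def)
    qed auto
    have uc: "uniformly_continuous_on KS \<Phi>" by (rule compact_uniformly_continuous[OF cPhi cK])
    obtain d0 where d0: "d0 > 0" "\<And>z z'. z \<in> KS \<Longrightarrow> z' \<in> KS \<Longrightarrow> dist z' z < d0 \<Longrightarrow> dist (\<Phi> z') (\<Phi> z) < e/2"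
      using uc[unfolded uniformly_continuous_on_def, rule_format, of "e/2"] e by auto
    define d where "d = min d0 (s/2)"
    have d: "d > 0" using d0 sp by (simp add: d_def)
    have "L2_dist (q s') (q s) < e" if s': "s' \<in> {0..1}" "\<bar>s' - s\<bar> < d" for s'
    proof -
      have "\<bar>s' - s\<bar> < s/2" using s' by (simp add: d_def)
      then have s'p: "s' \<ge> s/2" "s' \<noteq> 0" using sp by (auto simp: abs_if split: if_splits)
      have "L2_dist (q s') (q s) \<le> e/2"
      proof (rule L2_dist_le_unif[OF qc[OF s'(1)] qc[OF s]])
        show "0 \<le> e/2" using e by simp
        show "\<forall>t\<in>{0..1}. norm (q s' t - q s t) \<le> e/2"
        proof
          fix t :: real
          have inK: "(s', frac t) \<in> KS" "(s, frac t) \<in> KS" using s' s'p sp frac_in01[of t] by (auto simp: KS_def)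
          have "dist (s', frac t) (s, frac t) < d0" using s' by (simp add: dist_Pair_Pair dist_real_def d_def)
          then have "dist (\<Phi> (s', frac t)) (\<Phi> (s, frac t)) < e/2" using d0(2)[OF inK(2) inK(1)] by simp
          then show "norm (q s' t - q s t) \<le> e/2"
            using s'p False by (simp add: q_def \<Phi>_def dist_norm)
        qed
      qed
      then show ?thesis using e by simp
    qed
    then show ?thesis using d by blast
  qed
  have path: "L2_path_connects N q \<gamma> \<sigma>"
    unfolding L2_path_connects_def using qsl smooth_loop_L2 q0 q1 cont by blast
  have pw: "piecewise_smooth_loop N \<sigma>"
    unfolding piecewise_smooth_loop_def
  proof (intro conjI)
    show "continuous_on UNIV \<sigma>" by (simp add: \<sigma>_def)
    show "\<forall>t. \<sigma> (t + 1) = \<sigma> t" by (simp add: \<sigma>_def)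
    show "range \<sigma> \<subseteq> N" using g0N by (auto simp: \<sigma>_def)
    show "\<exists>P. finite P \<and> P \<subseteq> {0..1} \<and> 0 \<in> P \<and> 1 \<in> P \<and>
        (\<forall>a\<in>P. \<forall>b\<in>P. a < b \<and> {a<..<b} \<inter> P = {} \<longrightarrow> (\<exists>g. smooth_on UNIV g \<and> (\<forall>t\<in>{a..b}. \<sigma> t = g t)))"
      by (intro exI[of _ "{0,1}"]) (auto simp: \<sigma>_def intro!: exI[of _ "\<lambda>t. \<gamma> 0"] smooth_on_const)
  qed
  have nh: "null_homotopic_loop N \<sigma>"
    unfolding null_homotopic_loop_def \<sigma>_def
    by (intro exI[of _ "\<gamma> 0"] homotopic_loops_refl[THEN iffD2])
       (use g0N in \<open>auto simp: path_def path_image_def pathfinish_def pathstart_def\<close>)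
  show ?thesis using path pw nh by blast
qed

lemma based_approx:
  fixes N :: "'a::euclidean_space set"
  assumes N: "smooth_submanifold N" and cN: "connected N" and N0: "0 \<in> N"
    and \<gamma>: "\<gamma> \<in> smooth_loops N" and e: "e > 0"
  shows "\<exists>\<beta>\<in>based_smooth_loops N. L2_dist \<gamma> \<beta> < e"
proof -
  note g = smooth_loopsD[OF \<gamma>]
  have cg: "continuous_on UNIV \<gamma>" by (rule smooth_on_continuous_on[OF g(1)])
  obtain Mg where Mg: "Mg \<ge> 0" "\<And>t. norm (\<gamma> t) \<le> Mg" using periodic_bounded[OF cg g(2)] by blast
  have g0N: "\<gamma> 0 \<in> N" using g(3) by auto
  obtain c :: "real \<Rightarrow> 'a" where c: "smooth_on UNIV c" "range c \<subseteq> N" "\<forall>\<tau>\<le>0. c \<tau> = 0" "\<forall>\<tau>\<ge>1. c \<tau> = \<gamma> 0"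
    using submanifold_conn[OF N cN N0 g0N] unfolding conn_def by blast
  obtain Mc where Mc: "Mc \<ge> 0" "\<And>t. norm (c t) \<le> Mc"
    using curve_bounded[OF smooth_on_continuous_on[OF c(1)] c(3) c(4)] by blast
  define K where "K = 2 * Mg + Mc"
  define s where "s = min (1/4) (e\<^sup>2 / (4 * K\<^sup>2 + 1))"
  have k: "0 \<le> K\<^sup>2" by simp
  have den: "0 < 4 * K\<^sup>2 + 1" using k by linarith
  have "0 < e\<^sup>2 / (4 * K\<^sup>2 + 1)" using e den by simp
  then have s: "0 < s" "s \<le> 1/4" "s \<le> e\<^sup>2 / (4 * K\<^sup>2 + 1)"
    unfolding s_def by (simp_all only: min.cobounded1 min.cobounded2)
  define B where "B x = (if x \<le> s/2 then c ((8/s) * x + (-1))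
     else if x \<ge> 1 - s/2 then c ((-8/s) * x + (8/s - 1)) else \<gamma> (rho s x))" for x
  have sc1: "smooth_on UNIV (\<lambda>x. c ((8/s) * x + (-1)))" by (rule smooth_comp_affine[OF c(1)])
  have sc2: "smooth_on UNIV (\<lambda>x. c ((-8/s) * x + (8/s - 1)))" by (rule smooth_comp_affine[OF c(1)])
  have sg: "smooth_on UNIV (\<lambda>x. \<gamma> (rho s x))" by (rule smooth_on_compose[OF smooth_rho g(1)]) simp
  have sB: "smooth_on UNIV B"
  proof (rule smooth_on_local, rule allI)
    fix x :: real
    consider "x < s/2" | "x > 1 - s/2" | "s/4 < x \<and> x < 1 - s/4" using s by linarith
    then show "\<exists>S g. open S \<and> x \<in> S \<and> smooth_on UNIV g \<and> (\<forall>y\<in>S. B y = g y)"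
    proof cases
      case 1
      then show ?thesis using sc1
        by (intro exI[of _ "{..<s/2}"] exI[of _ "\<lambda>x. c ((8/s) * x + (-1))"]) (auto simp: B_def)
    next
      case 2
      have "\<forall>y\<in>{1 - s/2<..}. B y = c ((-8/s) * y + (8/s - 1))"
        using s by (auto simp: B_def)
      then show ?thesis using sc2 2
        by (intro exI[of _ "{1 - s/2<..}"] exI[of _ "\<lambda>x. c ((-8/s) * x + (8/s - 1))"]) auto
    next
      case 3
      have "B y = \<gamma> (rho s y)" if y: "y \<in> {s/4<..<1 - s/4}" for y
      proof -
        consider "y \<le> s/2" | "\<not> y \<le> s/2" "y \<ge> 1 - s/2" | "\<not> y \<le> s/2" "\<not> y \<ge> 1 - s/2" by blast
        then show ?thesis
        proof cases
          case 1
          have "(8/s) * y + (-1) \<ge> 1" using y s by (simp add: field_simps)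
          then show ?thesis using 1 c(4) s rho_zero1[of s y] by (simp add: B_def)
        next
          case 2
          have h: "2 * s \<le> 8 * (1 - y)" using y by simp
          have h2: "2 \<le> (8 * (1 - y)) / s" using h s by (simp add: le_divide_eq)
          have "(-8/s) * y + (8/s - 1) = (8 * (1 - y)) / s - 1" using s by (simp add: field_simps)
          then have "(-8/s) * y + (8/s - 1) \<ge> 1" using h2 by simp
          then show ?thesis using 2 c(4) s rho_zero2[of s y] by (simp add: B_def)
        next
          case 3
          then show ?thesis by (simp add: B_def)
        qed
      qed
      then show ?thesis using sg 3
        by (intro exI[of _ "{s/4<..<1 - s/4}"] exI[of _ "\<lambda>x. \<gamma> (rho s x)"]) auto
    qed
  qed
  have B0: "\<forall>x\<le>s/8. B x = 0"
  proof (intro allI impI)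
    fix x :: real assume x: "x \<le> s/8"
    have "(8/s) * x + (-1) \<le> 0" using x s by (simp add: field_simps)
    then show "B x = 0" using x s c(3) by (simp add: B_def)
  qed
  have B1: "\<forall>x\<ge>1 - s/8. B x = 0"
  proof (intro allI impI)
    fix x :: real assume x: "x \<ge> 1 - s/8"
    have h: "8 * (1 - x) \<le> s" using x by simp
    have h2: "(8 * (1 - x)) / s \<le> 1" using h s by (simp add: divide_le_eq)
    have "(-8/s) * x + (8/s - 1) = (8 * (1 - x)) / s - 1" using s by (simp add: field_simps)
    then have "(-8/s) * x + (8/s - 1) \<le> 0" using h2 by simp
    moreover have "\<not> x \<le> s/2" "x \<ge> 1 - s/2" using x s by auto
    ultimately show "B x = 0" using c(3) by (simp add: B_def)
  qed
  define \<beta> where "\<beta> t = B (frac t)" for t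
  have s\<beta>: "smooth_on UNIV \<beta>"
    unfolding \<beta>_def[abs_def] by (rule smooth_per[OF sB _ _ B0 B1]) (use s in auto)
  have rB: "B x \<in> N" for x using c(2) g(3) by (auto simp: B_def)
  have \<beta>based: "\<beta> \<in> based_smooth_loops N"
    using s\<beta> rB B0 s
    by (auto simp: based_smooth_loops_def smooth_loops_def \<beta>_def frac_1_eq)
  have nc: "norm (c y) \<le> Mg + Mc" for y using Mc(2)[of y] Mg(1) by linarith
  have ng: "norm (\<gamma> y) \<le> Mg + Mc" for y using Mg(2)[of y] Mc(1) by linarith
  have nB: "norm (B x) \<le> Mg + Mc" for x
    unfolding B_def using nc ng by simp
  have "(LINT t:{0..1}|lborel. (norm (\<gamma> t - \<beta> t))\<^sup>2) \<le> K\<^sup>2 * (2 * s)"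
  proof (rule L2_small_set[OF cg smooth_on_continuous_on[OF s\<beta>]])
    show "0 \<le> s" using s by simp
    show "\<forall>t\<in>{0..1}. norm (\<gamma> t - \<beta> t) \<le> K"
    proof
      fix t :: real
      have "norm (\<gamma> t - \<beta> t) \<le> norm (\<gamma> t) + norm (\<beta> t)" by (rule norm_triangle_ineq4)
      also have "\<dots> \<le> Mg + (Mg + Mc)" using Mg nB by (intro add_mono) (auto simp: \<beta>_def)
      finally show "norm (\<gamma> t - \<beta> t) \<le> K" by (simp add: K_def)
    qed
    show "\<forall>t\<in>{s..1 - s}. \<gamma> t = \<beta> t"
    proof
      fix t assume t: "t \<in> {s..1 - s}"
      then have "frac t = t" using s by (intro frac_eq_id) auto
      moreover have "\<not> t \<le> s/2" "\<not> t \<ge> 1 - s/2" using t s by auto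
      ultimately show "\<gamma> t = \<beta> t" using t s by (simp add: \<beta>_def B_def rho_id)
    qed
  qed
  also have "\<dots> < e\<^sup>2"
  proof -
    have "K\<^sup>2 * (2 * s) \<le> K\<^sup>2 * (2 * (e\<^sup>2 / (4 * K\<^sup>2 + 1)))" using s k by (intro mult_left_mono) auto
    also have "\<dots> = e\<^sup>2 * (2 * K\<^sup>2 / (4 * K\<^sup>2 + 1))" by (simp add: field_simps)
    also have "\<dots> < e\<^sup>2 * 1"
    proof (intro mult_strict_left_mono)
      have "2 * K\<^sup>2 < 4 * K\<^sup>2 + 1" using k by linarith
      then show "2 * K\<^sup>2 / (4 * K\<^sup>2 + 1) < 1" using den by (simp only: divide_less_eq_1_pos)
    qed (use e in simp)
    finally show ?thesis by simp
  qed
  finally have "L2_dist \<gamma> \<beta> < sqrt (e\<^sup>2)" unfolding L2_dist_def by (rule real_sqrt_less_mono)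
  then show ?thesis using e \<beta>based by auto
qed

lemma part1:
  fixes N :: "'a::euclidean_space set"
  assumes N: "smooth_submanifold N" and cN: "connected N" and N0: "0 \<in> N"
  shows "L2_0_loops N = L2_loops N"
proof
  show "L2_0_loops N \<subseteq> L2_loops N"
    unfolding L2_0_loops_def L2_loops_def L2_closure_def based_smooth_loops_def by blast
  show "L2_loops N \<subseteq> L2_0_loops N"
  proof
    fix f assume f: "f \<in> L2_loops N"
    then have fs: "square_integrable f" and fa: "\<forall>e>0. \<exists>g\<in>smooth_loops N. L2_dist f g < e"
      by (auto simp: L2_loops_def L2_closure_def)
    have "\<exists>\<beta>\<in>based_smooth_loops N. L2_dist f \<beta> < e" if e: "e > 0" for e
    proof -
      obtain \<gamma> where \<gamma>: "\<gamma> \<in> smooth_loops N" "L2_dist f \<gamma> < e/2" using fa e by (meson half_gt_zero)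
      obtain \<beta> where \<beta>: "\<beta> \<in> based_smooth_loops N" "L2_dist \<gamma> \<beta> < e/2"
        using based_approx[OF N cN N0 \<gamma>(1), of "e/2"] e by auto
      have \<beta>s: "\<beta> \<in> smooth_loops N" using \<beta>(1) by (simp add: based_smooth_loops_def)
      have gs: "square_integrable \<gamma>"
        by (rule cont_sq_int[OF smooth_on_continuous_on[OF smooth_loopsD(1)[OF \<gamma>(1)]]])
      have bs: "square_integrable \<beta>"
        by (rule cont_sq_int[OF smooth_on_continuous_on[OF smooth_loopsD(1)[OF \<beta>s]]])
      have "(L2_dist f \<beta>)\<^sup>2 \<le> 2 * (L2_dist f \<gamma>)\<^sup>2 + 2 * (L2_dist \<gamma> \<beta>)\<^sup>2" by (rule L2_tri[OF fs gs bs])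
      also have "\<dots> < 2 * (e/2)\<^sup>2 + 2 * (e/2)\<^sup>2"
        using \<gamma>(2) \<beta>(2) L2_dist_nonneg[of f \<gamma>] L2_dist_nonneg[of \<gamma> \<beta>]
        by (intro add_strict_mono mult_strict_left_mono power_strict_mono) auto
      also have "\<dots> = e\<^sup>2" by (simp add: power2_eq_square)
      finally have "(L2_dist f \<beta>)\<^sup>2 < e\<^sup>2" .
      then have "L2_dist f \<beta> < e" using e L2_dist_nonneg[of f \<beta>] by (simp add: power_less_imp_less_base)
      then show ?thesis using \<beta>(1) by blast
    qed
    then show "f \<in> L2_0_loops N" using fs by (auto simp: L2_0_loops_def L2_closure_def)
  qed
qed

theorem theorem2:
  fixes N :: "(complex ^ 'n ^ 'n) set"
  assumes "smooth_submanifold N" and "connected N" and "0 \<in> N"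
  shows "L2_0_loops N = L2_loops N \<and>
    (\<forall>\<gamma>\<in>smooth_loops N. \<exists>p \<sigma>. piecewise_smooth_loop N \<sigma> \<and> null_homotopic_loop N \<sigma> \<and>
        L2_path_connects N p \<gamma> \<sigma>)"
  using part1[OF assms] part2 by blast

end
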